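(* Let $G$ be a biconnected graph. If all 2.5-connected components of $G$ satisfy Hajós' conjecture, then $G$ satisfies Hajós' conjecture. In particular, every graph satisfies Hajós' conjecture if and only if every 2.5-connected graph satisfies Hajós' conjecture.
   Context: Graphs are finite, may have parallel edges (cycles of length 2 allowed), no loops. For a graph $H$, $m(H)$ is the minimum number of edges whose removal makes $H$ simple. A graph $H$ satisfies Hajós' conjecture if, whenever $H$ is Eulerian, its edge set can be decomposed into at most $\frac12(|V(H)|+m(H)-1)$ cycles (each edge in exactly one cycle). Biconnected: connected and for all pairwise distinct $u,v,w$ there is a $u$-$v$ path avoiding $w$. For biconnected $H$ not a triangle, $(c,uv)\in V(H)\times E(H)$ is a vertex-edge-separator if $H-uv-c$ is disconnected; then it has exactly two components $C_u\ni u,C_v\ni v$. For $a\in\{u,v\}$ with other endpoint $b$, let $H_a=H[V(C_a)\cup\{c\}]$; if $|E(H_a)|\ge2$, the 2.5-split replaces $H$ by $H_a+ac$ and $H[V(C_b)\cup\{c\}]+ba+ac$, where the two new edges $ac$ are (virtual) edges corresponding to each other. $H$ is 2.5-connected if biconnected with no vertex-edge-separator. Applying 2.5-splits until none is possible and then merging (gluing at corresponding virtual edges and deleting them) the resulting triangles as much as possible into cycles gives the 2.5-connected components of $G$, regarded as ordinary graphs. *)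

theory Defs
  imports "HOL-Library.Multiset"
begin

(* A (multi)graph: finite nonempty vertex set V and a multiset E of edges,
   each edge being a 2-element subset of V (parallel edges allowed, no loops). *)
definition wf_graph :: "'a set \<Rightarrow> 'a set multiset \<Rightarrow> bool" where
  "wf_graph V E \<longleftrightarrow> finite V \<and> V \<noteq> {} \<and> (\<forall>e\<in>#E. e \<subseteq> V \<and> card e = 2)"

definition degree :: "'a set multiset \<Rightarrow> 'a \<Rightarrow> nat" where
  "degree E v = size (filter_mset (\<lambda>e. v \<in> e) E)"

definition eulerian :: "'a set \<Rightarrow> 'a set multiset \<Rightarrow> bool" where
  "eulerian V E \<longleftrightarrow> (\<forall>v\<in>V. even (degree E v))"

definition simple_edges :: "'a set multiset \<Rightarrow> bool" where
  "simple_edges E \<longleftrightarrow> (\<forall>e. count E e \<le> 1)"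

definition mult_excess :: "'a set multiset \<Rightarrow> nat" where
  "mult_excess E = Min {size F | F. F \<subseteq># E \<and> simple_edges (E - F)}"

definition cycle_edges :: "'a list \<Rightarrow> 'a set multiset" where
  "cycle_edges vs = mset (map (\<lambda>i. {vs ! i, vs ! (Suc i mod length vs)}) [0..<length vs])"

(* a cycle (length 2 allowed: two parallel edges) given by its edge multiset *)
definition is_cycle :: "'a set multiset \<Rightarrow> bool" where
  "is_cycle C \<longleftrightarrow> (\<exists>vs. distinct vs \<and> length vs \<ge> 2 \<and> C = cycle_edges vs)"

definition hajos :: "'a set \<Rightarrow> 'a set multiset \<Rightarrow> bool" where
  "hajos V E \<longleftrightarrow> eulerian V E \<longrightarrow>
     (\<exists>cs. (\<forall>C\<in>set cs. is_cycle C) \<and> sum_list cs = E \<and>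
           2 * int (length cs) \<le> int (card V) + int (mult_excess E) - 1)"

definition reach :: "'a set multiset \<Rightarrow> 'a \<Rightarrow> 'a \<Rightarrow> bool" where
  "reach E = (\<lambda>x y. {x, y} \<in># E)\<^sup>*\<^sup>*"

definition connected_graph :: "'a set \<Rightarrow> 'a set multiset \<Rightarrow> bool" where
  "connected_graph V E \<longleftrightarrow> V \<noteq> {} \<and> (\<forall>x\<in>V. \<forall>y\<in>V. reach E x y)"

definition biconnected :: "'a set \<Rightarrow> 'a set multiset \<Rightarrow> bool" where
  "biconnected V E \<longleftrightarrow> connected_graph V E \<and>
     (\<forall>u\<in>V. \<forall>v\<in>V. \<forall>w\<in>V. u \<noteq> v \<and> u \<noteq> w \<and> v \<noteq> w \<longrightarrow>
        reach (filter_mset (\<lambda>e. w \<notin> e) E) u v)"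

definition triangle :: "'a set \<Rightarrow> 'a set multiset \<Rightarrow> bool" where
  "triangle V E \<longleftrightarrow> (\<exists>x y z. distinct [x, y, z] \<and> V = {x, y, z} \<and>
      E = {#{x, y}, {y, z}, {x, z}#})"

definition is_ve_sep :: "'a set \<Rightarrow> 'a set multiset \<Rightarrow> 'a \<Rightarrow> 'a \<Rightarrow> 'a \<Rightarrow> bool" where
  "is_ve_sep V E c u v \<longleftrightarrow> c \<in> V \<and> {u, v} \<in># E \<and> c \<notin> {u, v} \<and>
     \<not> connected_graph (V - {c}) (filter_mset (\<lambda>e. c \<notin> e) (E - {#{u, v}#}))"

definition conn25 :: "'a set \<Rightarrow> 'a set multiset \<Rightarrow> bool" where
  "conn25 V E \<longleftrightarrow> biconnected V E \<and>
     (\<not> triangle V E \<longrightarrow> \<not> (\<exists>c u v. is_ve_sep V E c u v))"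

(* Pieces of the decomposition: vertex set and labelled edges;
   label None = real edge, Some k = virtual edge of the corresponding pair k. *)
type_synonym 'a piece = "'a set \<times> ('a set \<times> nat option) multiset"

definition split_step :: "'a piece multiset \<Rightarrow> 'a piece multiset \<Rightarrow> bool" where
  "split_step F F' \<longleftrightarrow> (\<exists>V E rest c u v l a b k.
     F = add_mset (V, E) rest \<and>
     biconnected V (image_mset fst E) \<and> \<not> triangle V (image_mset fst E) \<and>
     ({u, v}, l) \<in># E \<and> is_ve_sep V (image_mset fst E) c u v \<and>
     ((a, b) = (u, v) \<or> (a, b) = (v, u)) \<and>
     (let E0 = filter_mset (\<lambda>e. c \<notin> e) (image_mset fst E - {#{u, v}#});
          Ca = {x. reach E0 a x};
          Cb = {x. reach E0 b x};
          Ea = filter_mset (\<lambda>e. fst e \<subseteq> Ca \<union> {c}) E;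
          Eb = filter_mset (\<lambda>e. fst e \<subseteq> Cb \<union> {c}) E
      in size Ea \<ge> 2 \<and>
         (\<forall>P\<in>#F. \<forall>e\<in>#snd P. snd e \<noteq> Some k) \<and>
         F' = add_mset (Ca \<union> {c}, add_mset ({a, c}, Some k) Ea)
                (add_mset (insert a (Cb \<union> {c}),
                           add_mset ({b, a}, l) (add_mset ({a, c}, Some k) Eb)) rest)))"

definition is_cycle_graph :: "'a set \<Rightarrow> 'a set multiset \<Rightarrow> bool" where
  "is_cycle_graph V E \<longleftrightarrow> (\<exists>vs. distinct vs \<and> length vs \<ge> 3 \<and> V = set vs \<and> E = cycle_edges vs)"

definition merge_step :: "'a piece multiset \<Rightarrow> 'a piece multiset \<Rightarrow> bool" where
  "merge_step F F' \<longleftrightarrow> (\<exists>V1 E1 V2 E2 rest e k.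
     F = add_mset (V1, E1) (add_mset (V2, E2) rest) \<and>
     is_cycle_graph V1 (image_mset fst E1) \<and> is_cycle_graph V2 (image_mset fst E2) \<and>
     (e, Some k) \<in># E1 \<and> (e, Some k) \<in># E2 \<and> V1 \<inter> V2 = e \<and>
     F' = add_mset (V1 \<union> V2, (E1 - {#(e, Some k)#}) + (E2 - {#(e, Some k)#})) rest)"

definition decomp25 :: "'a set \<Rightarrow> 'a set multiset \<Rightarrow> 'a piece multiset \<Rightarrow> bool" where
  "decomp25 V E F \<longleftrightarrow> (\<exists>F1. split_step\<^sup>*\<^sup>* {#(V, image_mset (\<lambda>e. (e, None)) E)#} F1 \<and>
      \<not> (\<exists>F'. split_step F1 F') \<and> merge_step\<^sup>*\<^sup>* F1 F \<and> \<not> (\<exists>F'. merge_step F F'))"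

end

theory Submission
  imports Defs
begin


lemma card_set_mset_le_size: "card (set_mset M) \<le> size M"
  by (induction M) (auto simp: card_insert_if)

lemma simple_size: "simple_edges M \<Longrightarrow> size M = card (set_mset M)"
proof -
  assume s: "simple_edges M"
  have "M = mset_set (set_mset M)"
  proof (rule multiset_eqI)
    fix x
    have "count M x \<le> 1" using s unfolding simple_edges_def by blast
    then show "count M x = count (mset_set (set_mset M)) x"
      apply (cases "x \<in># M")
       apply (auto simp: count_mset_set' not_in_iff)
      by (metis not_in_iff le_Suc_eq le_zero_eq)
  qed
  then show ?thesis by (metis size_mset_set)
qed

lemma mult_excess_eq: "mult_excess E = size E - card (set_mset E)"
proof -
  let ?S = "{size F | F. F \<subseteq># E \<and> simple_edges (E - F)}"
  define F0 where "F0 = E - mset_set (set_mset E)"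
  have sub: "mset_set (set_mset E) \<subseteq># E"
    by (simp add: subseteq_mset_def count_mset_set' Suc_le_eq)
  have "E - F0 = mset_set (set_mset E)" unfolding F0_def using sub
    by (simp add: subset_mset.diff_diff_right)
  then have "simple_edges (E - F0)" unfolding simple_edges_def
    by (simp add: count_mset_set')
  moreover have "F0 \<subseteq># E" unfolding F0_def by simp
  ultimately have in0: "size F0 \<in> ?S" by blast
  have sz0: "size F0 = size E - card (set_mset E)" unfolding F0_def
    using sub by (simp add: size_Diff_submset)
  have lb: "size E - card (set_mset E) \<le> x" if xS: "x \<in> ?S" for x
  proof -
    obtain F where F: "x = size F" "F \<subseteq># E" "simple_edges (E - F)" using xS by blast
    have "size (E - F) = card (set_mset (E - F))" using simple_size F(3) .
    also have "\<dots> \<le> card (set_mset E)" by (intro card_mono) (auto dest: in_diffD)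
    finally show ?thesis using F(1,2) by (simp add: size_Diff_submset)
  qed
  have fin: "finite ?S"
  proof (rule finite_subset)
    show "?S \<subseteq> {..size E}" by (auto intro: size_mset_mono)
  qed simp
  have "Min ?S = size F0"
    by (rule Min_eqI[OF fin]) (use lb sz0 in0 in auto)
  then show ?thesis unfolding mult_excess_def using sz0 by simp
qed

lemma degree_plus[simp]: "degree (A + B) v = degree A v + degree B v"
  unfolding degree_def by simp

lemma degree_add_mset[simp]: "degree (add_mset e A) v = degree A v + (if v \<in> e then 1 else 0)"
  unfolding degree_def by simp

lemma degree_empty[simp]: "degree {#} v = 0"
  unfolding degree_def by simp

lemma handshake:
  assumes "finite W" "\<forall>e\<in>#E. e \<subseteq> W \<and> card e = 2"
  shows "(\<Sum>x\<in>W. degree E x) = 2 * size E"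
  using assms(2)
proof (induction E)
  case empty then show ?case by simp
next
  case (add e E)
  have e: "e \<subseteq> W" "card e = 2" using add.prems by auto
  have "(\<Sum>x\<in>W. degree (add_mset e E) x) = (\<Sum>x\<in>W. degree E x) + (\<Sum>x\<in>W. if x \<in> e then 1 else 0)"
    by (simp add: sum.distrib)
  also have "(\<Sum>x\<in>W. if x \<in> e then 1 else (0::nat)) = card (W \<inter> e)"
    using assms(1) by (simp add: sum.If_cases Int_def)
  also have "W \<inter> e = e" using e by blast
  finally show ?case using add by (simp add: e)
qed

lemma even_deg_last:
  assumes "finite W" "\<forall>e\<in>#E. e \<subseteq> W \<and> card e = 2" "s \<in> W"
    "\<forall>x\<in>W - {s}. even (degree E x)"
  shows "even (degree E s)"
proof -
  have "(\<Sum>x\<in>W. degree E x) = degree E s + (\<Sum>x\<in>W - {s}. degree E x)"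
    using assms(1,3) by (simp add: sum.remove)
  moreover have "even (\<Sum>x\<in>W - {s}. degree E x)" using assms(4) by (intro dvd_sum) auto
  moreover note handshake[OF assms(1,2)]
  ultimately show ?thesis by (metis dvd_add_left_iff dvd_triv_left)
qed

lemma reach_refl[simp]: "reach E x x"
  unfolding reach_def by simp

lemma reach_edge: "{x, y} \<in># E \<Longrightarrow> reach E x y"
  unfolding reach_def by (simp add: r_into_rtranclp)

lemma reach_trans: "reach E x y \<Longrightarrow> reach E y z \<Longrightarrow> reach E x z"
  unfolding reach_def by simp

lemma reach_sym: "reach E x y \<Longrightarrow> reach E y x"
  unfolding reach_def
proof (induction rule: rtranclp_induct)
  case base then show ?case by simp
next
  case (step y z)
  have "{z, y} \<in># E" using step(2) by (simp add: insert_commute)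
  then show ?case using step(3) by (simp add: converse_rtranclp_into_rtranclp)
qed

lemma reach_mono: "reach E x y \<Longrightarrow> (\<And>p q. {p, q} \<in># E \<Longrightarrow> {p, q} \<in># E') \<Longrightarrow> reach E' x y"
  unfolding reach_def by (metis (no_types, lifting) mono_rtranclp)

lemma reach_mem: "reach E x y \<Longrightarrow> x = y \<or> (\<exists>e\<in>#E. y \<in> e)"
  unfolding reach_def by (induction rule: rtranclp_induct) auto

fun pe :: "'a list \<Rightarrow> 'a set multiset" where
  "pe [] = {#}"
| "pe [x] = {#}"
| "pe (x # y # xs) = add_mset {x, y} (pe (y # xs))"

lemma pe_append: "pe (xs @ ys) = pe xs + pe ys + (if xs \<noteq> [] \<and> ys \<noteq> [] then {#{last xs, hd ys}#} else {#})"
proof (induction xs rule: pe.induct)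
  case 1 then show ?case by simp
next
  case (2 x) then show ?case by (cases ys) auto
next
  case (3 x y xs) then show ?case by auto
qed

lemma pe_rev: "pe (rev xs) = pe xs"
proof (induction xs)
  case (Cons x xs)
  have "pe (rev (x # xs)) = pe xs + (if xs \<noteq> [] then {#{hd xs, x}#} else {#})"
    using Cons.IH by (simp add: pe_append last_rev)
  then show ?case by (cases xs) (auto simp: insert_commute)
qed simp

lemma pe_mem: "e \<in># pe vs \<Longrightarrow> \<exists>xs x y ys. vs = xs @ x # y # ys \<and> e = {x, y}"
proof (induction vs rule: pe.induct)
  case (3 x y xs)
  show ?case
  proof (cases "e = {x, y}")
    case True then show ?thesis by (metis append_Nil)
  next
    case False
    then have "e \<in># pe (y # xs)" using 3(2) by simp
    then obtain as p q bs where "y # xs = as @ p # q # bs" "e = {p, q}" using 3(1) by blast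
    then show ?thesis by (metis append_Cons)
  qed
qed simp_all

lemma pe_Cons: "pe (y # zs) = pe zs + (if zs \<noteq> [] then {#{y, hd zs}#} else {#})"
  by (cases zs) auto

lemma pe_size: "size (pe vs) = length vs - 1"
  by (induction vs rule: pe.induct) auto

lemma set_pe: "length vs \<ge> 2 \<Longrightarrow> set vs \<subseteq> \<Union> (set_mset (pe vs))"
proof (induction vs rule: pe.induct)
  case (3 x y xs)
  then show ?case by (cases xs) auto
qed simp_all

lemma pe_alt: "pe vs = mset (map (\<lambda>i. {vs ! i, vs ! Suc i}) [0..<length vs - 1])"
proof (induction vs rule: pe.induct)
  case (3 x y xs)
  have "[0..<length (x # y # xs) - 1] = 0 # map Suc [0..<length xs]"
    by (simp add: upt_conv_Cons map_Suc_upt del: upt_Suc)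
  then show ?case using 3 by (simp add: comp_def)
qed simp_all

lemma cycle_edges_pe: "vs \<noteq> [] \<Longrightarrow> cycle_edges vs = add_mset {last vs, hd vs} (pe vs)"
proof -
  assume ne: "vs \<noteq> []"
  define n where "n = length vs"
  have n: "n \<ge> 1" using ne n_def by (cases vs) auto
  have "[0..<n] = [0..<n - 1] @ [n - 1]" using n
    by (metis Suc_diff_1 less_eq_Suc_le upt_Suc_append zero_less_one le_less_trans less_numeral_extra(1) not_less)
  then have "map (\<lambda>i. {vs ! i, vs ! (Suc i mod n)}) [0..<n] =
     map (\<lambda>i. {vs ! i, vs ! (Suc i mod n)}) [0..<n - 1] @ [{vs ! (n - 1), vs ! (Suc (n - 1) mod n)}]"
    by simp
  moreover have "map (\<lambda>i. {vs ! i, vs ! (Suc i mod n)}) [0..<n - 1] = map (\<lambda>i. {vs ! i, vs ! Suc i}) [0..<n - 1]"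
    by (intro map_cong) auto
  moreover have "{vs ! (n - 1), vs ! (Suc (n - 1) mod n)} = {last vs, hd vs}"
    using n ne n_def by (simp add: last_conv_nth hd_conv_nth insert_commute)
  ultimately have "cycle_edges vs = mset (map (\<lambda>i. {vs ! i, vs ! Suc i}) [0..<n - 1]) + {#{last vs, hd vs}#}"
    unfolding cycle_edges_def n_def[symmetric] by (simp only: mset_append mset.simps)
  then show ?thesis unfolding pe_alt n_def by simp
qed

lemma open_cyc: "distinct P \<Longrightarrow> length P \<ge> 2 \<Longrightarrow> is_cycle (add_mset {last P, hd P} (pe P))"
  unfolding is_cycle_def by (metis cycle_edges_pe list.size(3) not_numeral_le_zero)

lemma cyc_rot:
  assumes "distinct vs" "length vs \<ge> 2" "{p, q} \<in># cycle_edges vs"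
  shows "\<exists>P. distinct P \<and> length P \<ge> 2 \<and> {p, q} = {last P, hd P} \<and>
           cycle_edges vs = add_mset {last P, hd P} (pe P)"
proof -
  have ne: "vs \<noteq> []" using assms(2) by auto
  note ce = cycle_edges_pe[OF ne]
  show ?thesis
  proof (cases "{p, q} = {last vs, hd vs}")
    case True then show ?thesis using assms ce by blast
  next
    case False
    then have "{p, q} \<in># pe vs" using assms(3) ce by simp
    then obtain xs x y ys where vs: "vs = xs @ x # y # ys" and pq: "{p, q} = {x, y}"
      using pe_mem by blast
    define P0 where "P0 = (y # ys) @ (xs @ [x])"
    have "distinct P0" using assms(1) vs P0_def by auto
    moreover have "length P0 \<ge> 2" using P0_def by simp
    moreover have "{p, q} = {last P0, hd P0}" using pq P0_def by (simp add: insert_commute)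
    moreover have "add_mset {last vs, hd vs} (pe vs) = add_mset {last P0, hd P0} (pe P0)"
      unfolding vs P0_def
      by (cases xs; cases ys) (simp_all add: pe_append pe_Cons insert_commute add_mset_commute)
    then have "cycle_edges vs = add_mset {last P0, hd P0} (pe P0)" using ce by simp
    ultimately show ?thesis by blast
  qed
qed

lemma cyc_open:
  assumes "is_cycle C" "{p, q} \<in># C" "p \<noteq> q"
  shows "\<exists>P. distinct P \<and> length P \<ge> 2 \<and> hd P = p \<and> last P = q \<and> C = add_mset {p, q} (pe P)"
proof -
  obtain vs where vs: "distinct vs" "length vs \<ge> 2" "C = cycle_edges vs"
    using assms(1) unfolding is_cycle_def by blast
  obtain P0 where P0: "distinct P0" "length P0 \<ge> 2" "{p, q} = {last P0, hd P0}"
    "C = add_mset {last P0, hd P0} (pe P0)"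
    using cyc_rot[OF vs(1,2)] assms(2) vs(3) by blast
  have ne: "P0 \<noteq> []" using P0(2) by auto
  show ?thesis
  proof (cases "hd P0 = p")
    case True
    then have "last P0 = q" using P0(3) assms(3) by (metis doubleton_eq_iff)
    then show ?thesis using True P0 by (metis insert_commute)
  next
    case False
    then have h: "hd P0 = q" "last P0 = p" using P0(3) by (metis doubleton_eq_iff)+
    have "distinct (rev P0)" "length (rev P0) \<ge> 2" "hd (rev P0) = p" "last (rev P0) = q"
      using P0 h ne by (auto simp: hd_rev last_rev)
    moreover have "C = add_mset {p, q} (pe (rev P0))" using P0(4) h by (simp add: pe_rev)
    ultimately show ?thesis by blast
  qed
qed

lemma mem_sum_list: "x \<in># sum_list cs \<Longrightarrow> \<exists>C\<in>set cs. x \<in># C"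
  by (induction cs) auto

lemma sub_sum_list: "C \<in> set cs \<Longrightarrow> C \<subseteq># sum_list cs"
  by (induction cs) (auto simp: subset_mset.add_increasing2 subset_mset.add_increasing)

lemma splice:
  assumes c1: "is_cycle C1" "{a, c} \<in># C1" and c2: "is_cycle C2" "{a, c} \<in># C2"
    and ac: "a \<noteq> c" and bc: "b \<noteq> c" and ab: "a \<noteq> b"
    and sub: "C2 \<subseteq># G2" and cnt: "count G2 {a, c} = 1"
    and aedges: "\<forall>e\<in>#G2. a \<in> e \<longrightarrow> e = {a, c} \<or> e = {a, b}"
    and disj: "\<Union> (set_mset C1) \<inter> \<Union> (set_mset C2) \<subseteq> {a, c}"
  shows "\<exists>C. is_cycle C \<and> C1 + C2 = add_mset {a, c} (add_mset {a, c} C)"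
proof -
  have "{c, a} \<in># C1" using c1(2) by (simp add: insert_commute)
  then obtain P1 where P1: "distinct P1" "length P1 \<ge> 2" "hd P1 = c" "last P1 = a"
    "C1 = add_mset {c, a} (pe P1)" using cyc_open[OF c1(1)] ac by metis
  obtain P2 where P2: "distinct P2" "length P2 \<ge> 2" "hd P2 = a" "last P2 = c"
    "C2 = add_mset {a, c} (pe P2)" using cyc_open[OF c2] ac by metis
  obtain y R where P2yR: "P2 = a # y # R" using P2(2,3)
    by (cases P2; cases "tl P2") auto
  have Rne: "R \<noteq> []"
  proof
    assume "R = []"
    then have "C2 = {#{a, c}, {a, c}#}" using P2 P2yR by auto
    then have "count C2 {a, c} = 2" by simp
    moreover have "count C2 {a, c} \<le> count G2 {a, c}" using sub by (simp add: mset_subset_eq_count)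
    ultimately show False using cnt by simp
  qed
  have lastR: "last R = c" using P2(4) P2yR Rne by simp
  have yc: "y \<noteq> c" using P2(1) P2yR Rne lastR by (metis distinct.simps(2) last_in_set list.set_intros(1) set_subset_Cons subsetD)
  have ya: "y \<noteq> a" using P2(1) P2yR by auto
  have "{a, y} \<in># C2" using P2(5) P2yR by simp
  then have "{a, y} \<in># G2" using sub by (meson mset_subset_eqD)
  then have "{a, y} = {a, c} \<or> {a, y} = {a, b}" using aedges by auto
  then have yb: "y = b" using yc ya by (metis doubleton_eq_iff)
  obtain z T where P1zT: "P1 = c # z # T" using P1(2,3)
    by (cases P1; cases "tl P1") auto
  define Q where "Q = (b # R) @ (z # T)"
  have setR: "set (b # R) \<subseteq> \<Union> (set_mset C2) - {a}"
  proof -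
    have "set P2 \<subseteq> \<Union> (set_mset (pe P2))" using set_pe P2(2) by blast
    then have "set P2 \<subseteq> \<Union> (set_mset C2)" using P2(5) by auto
    then show ?thesis using P2(1) P2yR yb by auto
  qed
  have setT: "set (z # T) \<subseteq> \<Union> (set_mset C1) - {c}"
  proof -
    have "set P1 \<subseteq> \<Union> (set_mset (pe P1))" using set_pe P1(2) by blast
    then have "set P1 \<subseteq> \<Union> (set_mset C1)" using P1(5) by auto
    then show ?thesis using P1(1) P1zT by auto
  qed
  have "set (b # R) \<inter> set (z # T) = {}" using setR setT disj by blast
  then have dQ: "distinct Q" unfolding Q_def using P2(1) P2yR yb P1(1) P1zT
    by (simp only: distinct_append) auto
  have lQ: "length Q \<ge> 2" unfolding Q_def by simp
  have hdQ: "hd Q = b" unfolding Q_def by simp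
  have lastQ: "last Q = a" unfolding Q_def using P1(4) P1zT by simp
  have peQ: "pe Q = pe (b # R) + pe (z # T) + {#{c, z}#}"
    unfolding Q_def pe_append using lastR Rne by simp
  have "C1 + C2 = add_mset {a, c} (add_mset {a, c} (add_mset {last Q, hd Q} (pe Q)))"
    unfolding peQ hdQ lastQ P1(5) P2(5) P1zT P2yR yb
    by (simp add: insert_commute add_mset_commute)
  then show ?thesis using open_cyc[OF dQ lQ] by blast
qed

lemma me_plus: "set_mset A \<inter> set_mset B = {} \<Longrightarrow> mult_excess (A + B) = mult_excess A + mult_excess B"
  using card_set_mset_le_size[of A] card_set_mset_le_size[of B]
  by (simp add: mult_excess_eq card_Un_disjoint)

lemma me_add_ge: "mult_excess A \<le> mult_excess (add_mset e A)"
  using card_set_mset_le_size[of A] by (cases "e \<in># A") (auto simp: mult_excess_eq card_insert_if Suc_diff_le)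

lemma me_add_le: "mult_excess (add_mset e A) \<le> mult_excess A + 1"
  using card_set_mset_le_size[of A] by (cases "e \<in># A") (auto simp: mult_excess_eq card_insert_if Suc_diff_le)

lemma me_add_new: "e \<notin># A \<Longrightarrow> mult_excess (add_mset e A) = mult_excess A"
  using card_set_mset_le_size[of A] by (cases "e \<in># A") (auto simp: mult_excess_eq card_insert_if Suc_diff_le)

lemma degree_filter_same: "(\<And>e. e \<in># E \<Longrightarrow> x \<in> e \<Longrightarrow> P e) \<Longrightarrow> degree (filter_mset P E) x = degree E x"
  unfolding degree_def by (metis (mono_tags, lifting) filter_filter_mset filter_mset_cong)

lemma degree_zero: "(\<And>e. e \<in># E \<Longrightarrow> x \<notin> e) \<Longrightarrow> degree E x = 0"
  unfolding degree_def by (simp add: filter_mset_eq_mempty_iff)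

lemma degree_split: "degree E x = degree (filter_mset P E) x + degree (filter_mset (\<lambda>e. \<not> P e) E) x"
  by (metis degree_plus multiset_partition)

lemma cycle_sub_vertices:
  assumes "C \<in> set cs" "sum_list cs = G" "\<forall>e\<in>#G. e \<subseteq> W"
  shows "\<Union> (set_mset C) \<subseteq> W"
  using sub_sum_list[OF assms(1)] assms(2,3) by (auto dest: mset_subset_eqD)

lemma comb:
  assumes wf: "wf_graph V E" and AV: "A \<subseteq> V" and SV: "S \<subseteq> V" and AS: "A \<inter> S = {}"
    and cS: "card S \<le> 1"
    and edges: "\<forall>e\<in>#E. e \<subseteq> A \<union> S \<or> e \<inter> A = {}"
    and h1: "hajos (A \<union> S) (filter_mset (\<lambda>e. e \<inter> A \<noteq> {}) E)"
    and h2: "hajos (V - A) (filter_mset (\<lambda>e. \<not> e \<inter> A \<noteq> {}) E)"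
  shows "hajos V E"
  unfolding hajos_def
proof
  assume eul: "eulerian V E"
  define E1 where "E1 = filter_mset (\<lambda>e. e \<inter> A \<noteq> {}) E"
  define E2 where "E2 = filter_mset (\<lambda>e. \<not> e \<inter> A \<noteq> {}) E"
  have finV: "finite V" using wf unfolding wf_graph_def by auto
  have EE: "E = E1 + E2" unfolding E1_def E2_def by (rule multiset_partition)
  have wfE: "\<forall>e\<in>#E. e \<subseteq> V \<and> card e = 2" using wf unfolding wf_graph_def by auto
  have wf1: "\<forall>e\<in>#E1. e \<subseteq> A \<union> S \<and> card e = 2" using wfE edges unfolding E1_def by auto
  have wf2: "\<forall>e\<in>#E2. e \<subseteq> V - A \<and> card e = 2" using wfE unfolding E2_def by auto
  have fin1: "finite (A \<union> S)" using AV SV finV by (meson finite_subset le_sup_iff)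
  have degE: "even (degree E x)" if "x \<in> V" for x using eul that unfolding eulerian_def by auto
  have dsplit: "degree E x = degree E1 x + degree E2 x" for x unfolding E1_def E2_def by (rule degree_split)
  have d1A: "degree E1 x = degree E x" if "x \<in> A" for x
    unfolding E1_def using that by (intro degree_filter_same) auto
  have d2: "degree E2 x = degree E x" if "x \<in> V - A - S" for x
    unfolding E2_def using that edges by (intro degree_filter_same) auto
  have eul1: "eulerian (A \<union> S) E1" unfolding eulerian_def
  proof
    fix x assume x: "x \<in> A \<union> S"
    show "even (degree E1 x)"
    proof (cases "x \<in> A")
      case True then show ?thesis using d1A degE AV by auto
    next
      case False
      then have "x \<in> S" using x by auto
      then have "S = {x}" using cS by (metis One_nat_def card_1_singletonE card_le_Suc0_iff_eq empty_iff insert_iff le_antisym less_one not_le card_eq_0_iff finite_subset SV finV)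
      then have "A \<union> S - {x} = A" using AS by auto
      then show ?thesis using even_deg_last[OF fin1 wf1 x] d1A degE AV by auto
    qed
  qed
  have eul2: "eulerian (V - A) E2" unfolding eulerian_def
  proof
    fix x assume x: "x \<in> V - A"
    show "even (degree E2 x)"
    proof (cases "x \<in> S")
      case False then show ?thesis using d2 degE x by auto
    next
      case True
      have "even (degree E1 x)" using eul1 True unfolding eulerian_def by auto
      then show ?thesis using dsplit[of x] degE[of x] x by auto
    qed
  qed
  obtain cs1 where cs1: "\<forall>C\<in>set cs1. is_cycle C" "sum_list cs1 = E1"
    "2 * int (length cs1) \<le> int (card (A \<union> S)) + int (mult_excess E1) - 1"
    using h1 eul1 unfolding hajos_def E1_def by blast
  obtain cs2 where cs2: "\<forall>C\<in>set cs2. is_cycle C" "sum_list cs2 = E2"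
    "2 * int (length cs2) \<le> int (card (V - A)) + int (mult_excess E2) - 1"
    using h2 eul2 unfolding hajos_def E2_def by blast
  have "set_mset E1 \<inter> set_mset E2 = {}" unfolding E1_def E2_def by auto
  then have me: "mult_excess E = mult_excess E1 + mult_excess E2" using EE me_plus by metis
  have "card (A \<union> S) + card (V - A) = card V + card S"
  proof -
    have "card (A \<union> S) = card A + card S" using AS fin1 by (simp add: card_Un_disjoint)
    moreover have "card (V - A) + card A = card V" using AV finV
      by (metis card_Diff_subset finite_subset le_add_diff_inverse2 card_mono)
    ultimately show ?thesis by simp
  qed
  then have "int (card (A \<union> S)) + int (card (V - A)) \<le> int (card V) + 1" using cS by linarith
  then have "2 * int (length (cs1 @ cs2)) \<le> int (card V) + int (mult_excess E) - 1"
    using cs1(3) cs2(3) me by simp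
  moreover have "sum_list (cs1 @ cs2) = E" using cs1(2) cs2(2) EE by simp
  moreover have "\<forall>C\<in>set (cs1 @ cs2). is_cycle C" using cs1(1) cs2(1) by auto
  ultimately show "\<exists>cs. (\<forall>C\<in>set cs. is_cycle C) \<and> sum_list cs = E \<and>
          2 * int (length cs) \<le> int (card V) + int (mult_excess E) - 1" by blast
qed

lemma in_diff_single: "x \<noteq> y \<Longrightarrow> x \<in># M - {#y#} \<longleftrightarrow> x \<in># M"
  by (simp add: in_diff_count)

locale vesep =
  fixes V :: "'a set" and E :: "'a set multiset" and c a b :: 'a
  assumes wf: "wf_graph V E" and bic: "biconnected V E" and sep: "is_ve_sep V E c a b"
begin

definition "E0 = filter_mset (\<lambda>e. c \<notin> e) (E - {#{a, b}#})"
definition "Ca = {x. reach E0 a x}"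
definition "Cb = {x. reach E0 b x}"
definition "Ea = filter_mset (\<lambda>e. e \<subseteq> Ca \<union> {c}) E"
definition "Eb = filter_mset (\<lambda>e. e \<subseteq> Cb \<union> {c}) E"

lemma wfE: "\<forall>e\<in>#E. e \<subseteq> V \<and> card e = 2" and finV: "finite V"
  using wf unfolding wf_graph_def by auto

lemma abE: "{a, b} \<in># E" and cV: "c \<in> V" and cab: "c \<noteq> a" "c \<noteq> b"
  using sep unfolding is_ve_sep_def by auto

lemma ab: "a \<noteq> b"
proof
  assume "a = b"
  then have "card {a, b} = 1" by simp
  with wfE abE show False by auto
qed

lemma abV: "a \<in> V" "b \<in> V" using wfE abE by auto

lemma E0_edge: "e \<in># E0 \<Longrightarrow> e \<in># E \<and> c \<notin> e"
  unfolding E0_def by (auto dest: in_diffD)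

lemma reach0_V: "reach E0 x y \<Longrightarrow> x \<in> V - {c} \<Longrightarrow> y \<in> V - {c}"
  using reach_mem[of E0 x y] E0_edge wfE by blast

lemma Ca_sub: "Ca \<subseteq> V - {c}" and Cb_sub: "Cb \<subseteq> V - {c}"
  unfolding Ca_def Cb_def using reach0_V abV cab by auto

lemma aCa: "a \<in> Ca" and bCb: "b \<in> Cb"
  unfolding Ca_def Cb_def by auto

lemma bic2: "u\<in>V \<Longrightarrow> v\<in>V \<Longrightarrow> w\<in>V \<Longrightarrow> u\<noteq>v \<Longrightarrow> u\<noteq>w \<Longrightarrow> v\<noteq>w \<Longrightarrow>
       reach (filter_mset (\<lambda>e. w \<notin> e) E) u v"
  using bic unfolding biconnected_def by (metis (no_types, lifting))

lemma reachc_E0: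
  assumes "reach (filter_mset (\<lambda>e. c \<notin> e) E) x y"
  shows "reach E0 x y \<or> reach E0 x a \<or> reach E0 x b"
  using assms unfolding reach_def
proof (induction rule: rtranclp_induct)
  case base then show ?case by simp
next
  case (step y z)
  show ?case
  proof (cases "{y, z} = {a, b}")
    case True
    then have "y = a \<or> y = b" by (metis doubleton_eq_iff)
    then show ?thesis using step(3) unfolding reach_def by auto
  next
    case False
    then have "{y, z} \<in># E0" using step(2) unfolding E0_def by (auto simp: in_diff_single)
    then show ?thesis using step(3) unfolding reach_def by (meson rtranclp.rtrancl_into_rtrancl)
  qed
qed

lemma cover: "V - {c} \<subseteq> Ca \<union> Cb"
proof
  fix x assume x: "x \<in> V - {c}"
  show "x \<in> Ca \<union> Cb"
  proof (cases "x = a")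
    case True then show ?thesis using aCa by auto
  next
    case False
    have "reach (filter_mset (\<lambda>e. c \<notin> e) E) x a"
      by (rule bic2) (use False x abV cab cV in auto)
    then have "reach E0 x a \<or> reach E0 x b" using reachc_E0 by metis
    then have "reach E0 a x \<or> reach E0 b x" by (metis reach_sym)
    then show ?thesis unfolding Ca_def Cb_def by simp
  qed
qed

lemma disj: "Ca \<inter> Cb = {}"
proof (rule ccontr)
  assume "Ca \<inter> Cb \<noteq> {}"
  then obtain x where "reach E0 a x" "reach E0 b x" unfolding Ca_def Cb_def by auto
  then have abr: "reach E0 a b" by (metis reach_sym reach_trans)
  have toa: "reach E0 a p" if "p \<in> V - {c}" for p
  proof -
    have "p \<in> Ca \<or> p \<in> Cb" using cover that by auto
    then show ?thesis unfolding Ca_def Cb_def using abr by (metis mem_Collect_eq reach_trans)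
  qed
  have "connected_graph (V - {c}) E0" unfolding connected_graph_def
  proof (intro conjI ballI)
    show "V - {c} \<noteq> {}" using abV cab by auto
  next
    fix p q assume "p \<in> V - {c}" "q \<in> V - {c}"
    then have "reach E0 a p" "reach E0 a q" using toa by auto
    then show "reach E0 p q" by (metis reach_sym reach_trans)
  qed
  then show False using sep unfolding is_ve_sep_def E0_def by simp
qed

lemma V_eq: "V = Ca \<union> Cb \<union> {c}"
  using cover Ca_sub Cb_sub cV by auto

lemma finCa: "finite Ca" and finCb: "finite Cb"
  using Ca_sub Cb_sub finV finite_subset by blast+

lemma cardV: "card V = card Ca + card Cb + 1"
proof -
  have "c \<notin> Ca \<union> Cb" using Ca_sub Cb_sub by auto
  then show ?thesis unfolding V_eq using finCa finCb disj
    by (simp add: card_Un_disjoint)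
qed

lemma edge_class:
  assumes "e \<in># E - {#{a, b}#}"
  shows "(e \<subseteq> Ca \<union> {c}) \<noteq> (e \<subseteq> Cb \<union> {c})"
proof -
  have eE: "e \<in># E" using assms by (auto dest: in_diffD)
  then obtain x y where e: "e = {x, y}" "x \<noteq> y" using wfE by (metis card_2_iff)
  have xy: "x \<in> V" "y \<in> V" using wfE eE e by auto
  have Cc: "c \<notin> Ca" "c \<notin> Cb" using Ca_sub Cb_sub by auto
  show ?thesis
  proof (cases "c \<in> e")
    case True
    then have "x = c \<or> y = c" using e by auto
    then show ?thesis using e cover xy disj Cc by auto
  next
    case False
    then have "e \<in># E0" unfolding E0_def set_mset_filter mem_Collect_eq using assms by blast
    then have r: "reach E0 x y" using e reach_edge by auto
    have "x \<in> Ca \<union> Cb" "y \<in> Ca \<union> Cb" using cover xy False e by auto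
    moreover have "x \<in> Ca \<longleftrightarrow> y \<in> Ca" "x \<in> Cb \<longleftrightarrow> y \<in> Cb"
      unfolding Ca_def Cb_def using r by (metis mem_Collect_eq reach_sym reach_trans)+
    ultimately show ?thesis using e disj False by auto
  qed
qed

lemma E_split: "E = add_mset {a, b} (Ea + Eb)"
proof -
  define E' where "E' = E - {#{a, b}#}"
  have EE': "E = add_mset {a, b} E'" unfolding E'_def using abE by simp
  have nab: "\<not> {a, b} \<subseteq> Ca \<union> {c}" "\<not> {a, b} \<subseteq> Cb \<union> {c}"
    using bCb aCa disj cab by auto
  have "Ea = filter_mset (\<lambda>e. e \<subseteq> Ca \<union> {c}) E'" unfolding Ea_def using EE' nab
    by (metis filter_mset_add_mset)
  moreover have "Eb = filter_mset (\<lambda>e. e \<subseteq> Cb \<union> {c}) E'" unfolding Eb_def using EE' nab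
    by (metis filter_mset_add_mset)
  moreover have "filter_mset (\<lambda>e. e \<subseteq> Cb \<union> {c}) E' = filter_mset (\<lambda>e. \<not> e \<subseteq> Ca \<union> {c}) E'"
    using edge_class unfolding E'_def by (intro filter_mset_cong) auto
  ultimately have "Ea + Eb = E'" by (metis multiset_partition)
  then show ?thesis using EE' by simp
qed

lemma Eb_no_a: "e \<in># Eb \<Longrightarrow> a \<notin> e" and Ea_no_b: "e \<in># Ea \<Longrightarrow> b \<notin> e"
  unfolding Ea_def Eb_def using aCa bCb disj cab by auto

lemma Ea_Eb_disj: "set_mset Ea \<inter> set_mset Eb = {}"
proof (rule ccontr)
  assume "set_mset Ea \<inter> set_mset Eb \<noteq> {}"
  then obtain e where e: "e \<in># Ea" "e \<in># Eb" by blast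
  then have "e \<subseteq> {c}" using disj unfolding Ea_def Eb_def by auto
  then have "card e \<le> 1" using card_mono[of "{c}" e] by simp
  moreover have "e \<in># E" using e(1) unfolding Ea_def by simp
  then have "card e = 2" using wfE by auto
  ultimately show False by simp
qed

end




context vesep begin

lemma Ca_no_c: "c \<notin> Ca" and Cb_no_c: "c \<notin> Cb" using Ca_sub Cb_sub by auto

lemma core:
  assumes h1: "hajos (Ca \<union> {c}) (add_mset {a, c} Ea)"
    and h2: "hajos (insert a (Cb \<union> {c})) (add_mset {b, a} (add_mset {a, c} Eb))"
  shows "hajos V E"
  unfolding hajos_def
proof
  assume eul: "eulerian V E"
  define V1 where "V1 = Ca \<union> {c}"
  define V2 where "V2 = insert a (Cb \<union> {c})"
  define G1 where "G1 = add_mset {a, c} Ea"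
  define G2 where "G2 = add_mset {b, a} (add_mset {a, c} Eb)"
  have degE: "even (degree E x)" if "x \<in> V" for x using eul that unfolding eulerian_def by auto
  obtain A B where AB: "A = Ea" "B = Eb" and EAB: "E = add_mset {a, b} (A + B)"
    using E_split by blast
  have dE: "degree E x = (if x \<in> {a, b} then 1 else 0) + degree Ea x + degree Eb x" for x
  proof -
    have "degree E x = degree (add_mset {a, b} (A + B)) x" using EAB by simp
    then show ?thesis using AB by simp
  qed
  have dEb0: "degree Eb x = 0" if "x \<notin> Cb \<union> {c}" for x
    using that unfolding Eb_def by (intro degree_zero) auto
  have dEa0: "degree Ea x = 0" if "x \<notin> Ca \<union> {c}" for x
    using that unfolding Ea_def by (intro degree_zero) auto
  have wfG1: "\<forall>e\<in>#G1. e \<subseteq> V1 \<and> card e = 2"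
    unfolding G1_def V1_def Ea_def using wfE aCa cab by auto
  have wfG2: "\<forall>e\<in>#G2. e \<subseteq> V2 \<and> card e = 2"
    unfolding G2_def V2_def Eb_def using wfE bCb cab ab by auto
  have finV1: "finite V1" unfolding V1_def using finCa by simp
  have finV2: "finite V2" unfolding V2_def using finCb by simp
  have aV1: "a \<in> V1" and cV1: "c \<in> V1" unfolding V1_def using aCa by auto
  have ac: "a \<noteq> c" using cab by auto
  have dG1: "degree G1 x = degree Ea x + (if x \<in> {a, c} then 1 else 0)" for x
    unfolding G1_def by simp
  have eul1: "eulerian V1 G1" unfolding eulerian_def
  proof
    fix x assume x: "x \<in> V1"
    have odd1: "even (degree G1 y)" if y: "y \<in> V1 - {c}" for y
    proof -
      have yCa: "y \<in> Ca" "y \<noteq> c" "y \<noteq> b" using y bCb disj unfolding V1_def by auto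
      have "y \<notin> Cb \<union> {c}" using yCa disj by auto
      then have "degree E y = (if y = a then 1 else 0) + degree Ea y" using dE[of y] dEb0 yCa by simp
      moreover have "degree G1 y = degree Ea y + (if y = a then 1 else 0)" using dG1[of y] yCa by simp
      moreover have "y \<in> V" using yCa Ca_sub by auto
      ultimately show ?thesis using degE[of y] by simp
    qed
    show "even (degree G1 x)"
    proof (cases "x = c")
      case True then show ?thesis using even_deg_last[OF finV1 wfG1 cV1] odd1 by auto
    next
      case False then show ?thesis using odd1 x by auto
    qed
  qed
  have evc1: "even (degree G1 c)" using eul1 cV1 unfolding eulerian_def by auto
  have eul2: "eulerian V2 G2" unfolding eulerian_def
  proof
    fix x assume x: "x \<in> V2"
    have dG2: "degree G2 x = degree Eb x + (if x \<in> {b, a} then 1 else 0) + (if x \<in> {a, c} then 1 else 0)"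
      unfolding G2_def by simp
    consider "x = a" | "x = c" | "x \<in> Cb" "x \<noteq> c" "x \<noteq> a" using x unfolding V2_def by auto
    then show "even (degree G2 x)"
    proof cases
      case 1
      have "a \<notin> Cb \<union> {c}" using aCa disj cab by auto
      then show ?thesis using dG2 dEb0[of a] 1 by simp
    next
      case 2
      have "even (degree Ea c + 1)" using evc1 dG1[of c] by simp
      moreover have "even (degree Ea c + degree Eb c)" using degE[OF cV] dE[of c] cab by simp
      ultimately show ?thesis using dG2 2 cab by simp
    next
      case 3
      have "x \<notin> Ca \<union> {c}" using 3 disj by auto
      then have "degree E x = (if x = b then 1 else 0) + degree Eb x" using dE[of x] dEa0 3 by simp
      moreover have "x \<in> V" using 3 Cb_sub by auto
      ultimately show ?thesis using degE[of x] dG2 3 by simp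
    qed
  qed
  obtain cs1 where cs1: "\<forall>C\<in>set cs1. is_cycle C" "sum_list cs1 = G1"
    "2 * int (length cs1) \<le> int (card V1) + int (mult_excess G1) - 1"
  proof -
    have "hajos V1 G1" unfolding V1_def G1_def by (rule h1)
    then show ?thesis using that eul1 unfolding hajos_def by blast
  qed
  obtain cs2 where cs2: "\<forall>C\<in>set cs2. is_cycle C" "sum_list cs2 = G2"
    "2 * int (length cs2) \<le> int (card V2) + int (mult_excess G2) - 1"
  proof -
    have "hajos V2 G2" unfolding V2_def G2_def by (rule h2)
    then show ?thesis using that eul2 unfolding hajos_def by blast
  qed
  have "{a, c} \<in># G1" unfolding G1_def by simp
  then have "{a, c} \<in># sum_list cs1" using cs1(2) by simp
  then obtain C1 where C1: "C1 \<in> set cs1" "{a, c} \<in># C1" using mem_sum_list[of "{a, c}" cs1] by blast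
  have "{a, c} \<in># G2" unfolding G2_def by simp
  then have "{a, c} \<in># sum_list cs2" using cs2(2) by simp
  then obtain C2 where C2: "C2 \<in> set cs2" "{a, c} \<in># C2" using mem_sum_list[of "{a, c}" cs2] by blast
  have nEb: "e \<notin># Eb" if "a \<in> e" for e using Eb_no_a that by blast
  have bac: "{b, a} \<noteq> {a, c}" using cab ab by (metis doubleton_eq_iff)
  have cnt: "count G2 {a, c} = 1" unfolding G2_def using nEb[of "{a, c}"] bac
    by (simp add: not_in_iff)
  have aedges: "\<forall>e\<in>#G2. a \<in> e \<longrightarrow> e = {a, c} \<or> e = {a, b}"
    unfolding G2_def using nEb by (auto simp: insert_commute)
  have v1: "\<Union> (set_mset C1) \<subseteq> V1" using cycle_sub_vertices[OF C1(1) cs1(2)] wfG1 by blast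
  have v2: "\<Union> (set_mset C2) \<subseteq> V2" using cycle_sub_vertices[OF C2(1) cs2(2)] wfG2 by blast
  have "V1 \<inter> V2 \<subseteq> {a, c}" unfolding V1_def V2_def using disj by auto
  then have dj: "\<Union> (set_mset C1) \<inter> \<Union> (set_mset C2) \<subseteq> {a, c}" using v1 v2 by blast
  have subC2: "C2 \<subseteq># G2" using sub_sum_list[OF C2(1)] cs2(2) by simp
  obtain C where C: "is_cycle C" "C1 + C2 = add_mset {a, c} (add_mset {a, c} C)"
  proof -
    have "is_cycle C1" "is_cycle C2" using cs1(1) cs2(1) C1(1) C2(1) by auto
    moreover have "b \<noteq> c" using cab by auto
    ultimately show ?thesis using that splice[OF _ C1(2) _ C2(2) ac _ ab subC2 cnt aedges dj] by blast
  qed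
  obtain xs1 ys1 where cs1s: "cs1 = xs1 @ C1 # ys1" using split_list[OF C1(1)] by blast
  obtain xs2 ys2 where cs2s: "cs2 = xs2 @ C2 # ys2" using split_list[OF C2(1)] by blast
  define cs where "cs = C # xs1 @ ys1 @ xs2 @ ys2"
  have "\<forall>C\<in>set cs. is_cycle C" unfolding cs_def using C(1) cs1(1) cs2(1) cs1s cs2s by auto
  moreover have "sum_list cs = E"
  proof -
    have "add_mset {a, c} (add_mset {a, c} (sum_list cs)) = sum_list cs1 + sum_list cs2"
      unfolding cs_def cs1s cs2s using C(2)
      by (simp add: algebra_simps)
    also have "\<dots> = add_mset {a, c} (add_mset {a, c} (add_mset {a, b} (A + B)))"
      unfolding cs1(2) cs2(2) G1_def G2_def AB by (simp add: insert_commute)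
    also have "\<dots> = add_mset {a, c} (add_mset {a, c} E)" using EAB by simp
    finally show ?thesis by simp
  qed
  moreover have "2 * int (length cs) \<le> int (card V) + int (mult_excess E) - 1"
  proof -
    have lcs: "length cs + 1 = length cs1 + length cs2" unfolding cs_def cs1s cs2s by simp
    have cV1: "card V1 = card Ca + 1" unfolding V1_def using finCa Ca_no_c by simp
    have "a \<notin> Cb \<union> {c}" using aCa disj cab by auto
    then have cV2: "card V2 = card Cb + 2" unfolding V2_def using finCb Cb_no_c by simp
    have m1: "mult_excess G1 \<le> mult_excess Ea + 1" unfolding G1_def by (rule me_add_le)
    have "mult_excess G2 = mult_excess (add_mset {a, c} Eb)" unfolding G2_def
      by (rule me_add_new) (use nEb bac in auto)
    also have "\<dots> = mult_excess Eb" by (rule me_add_new) (use nEb in auto)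
    finally have m2: "mult_excess G2 = mult_excess Eb" .
    have "mult_excess Ea + mult_excess Eb = mult_excess (Ea + Eb)" using me_plus[OF Ea_Eb_disj] by simp
    also have "\<dots> \<le> mult_excess E"
    proof -
      have "mult_excess (A + B) \<le> mult_excess E" using me_add_ge[of "A + B" "{a, b}"] EAB by simp
      then show ?thesis using AB by simp
    qed
    finally have "mult_excess G1 + mult_excess G2 \<le> mult_excess E + 1" using m1 m2 by simp
    then have "int (mult_excess G1) + int (mult_excess G2) \<le> int (mult_excess E) + 1" by linarith
    moreover have "int (card V1) + int (card V2) = int (card V) + 2" using cV1 cV2 cardV by simp
    moreover have "int (length cs) + 1 = int (length cs1) + int (length cs2)" using lcs by linarith
    ultimately show ?thesis using cs1(3) cs2(3) by linarith
  qed
  ultimately show "\<exists>cs. (\<forall>C\<in>set cs. is_cycle C) \<and> sum_list cs = E \<and>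
          2 * int (length cs) \<le> int (card V) + int (mult_excess E) - 1" by blast
qed

lemma wfG1: "wf_graph (Ca \<union> {c}) (add_mset {a, c} Ea)"
  unfolding wf_graph_def Ea_def using wfE aCa cab finCa by auto

lemma wfG2: "wf_graph (insert a (Cb \<union> {c})) (add_mset {b, a} (add_mset {a, c} Eb))"
  unfolding wf_graph_def Eb_def using wfE bCb cab ab finCb by auto

lemma size_E: "size E = size Ea + size Eb + 1"
proof -
  obtain A B where AB: "A = Ea" "B = Eb" and EAB: "E = add_mset {a, b} (A + B)"
    using E_split by blast
  have "size E = size A + size B + 1" using EAB by simp
  then show ?thesis using AB by simp
qed

lemma reach_first: "reach M x y \<Longrightarrow> x \<noteq> y \<Longrightarrow> \<exists>z. {x, z} \<in># M \<and> reach M z y"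
  unfolding reach_def by (induction rule: converse_rtranclp_induct) auto

lemma Ea_c: "\<exists>e\<in>#Ea. c \<in> e"
proof -
  have r: "reach (filter_mset (\<lambda>e. b \<notin> e) E) a c"
    by (rule bic2) (use abV cV cab ab in auto)
  have "z \<in> Ca \<or> (\<exists>e\<in>#Ea. c \<in> e)" if "reach (filter_mset (\<lambda>e. b \<notin> e) E) a z" for z
    using that unfolding reach_def
  proof (induction rule: rtranclp_induct)
    case base then show ?case using aCa by simp
  next
    case (step y z)
    show ?case
    proof (cases "\<exists>e\<in>#Ea. c \<in> e")
      case True then show ?thesis by simp
    next
      case False
      then have yCa: "y \<in> Ca" using step(3) by simp
      have yz: "{y, z} \<in># E" "b \<notin> {y, z}" using step(2) by auto
      show ?thesis
      proof (cases "c \<in> {y, z}")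
        case True
        have "{y, z} \<subseteq> Ca \<union> {c}" using True yCa Ca_no_c by auto
        then have "{y, z} \<in># Ea" unfolding Ea_def using yz by simp
        then show ?thesis using True by blast
      next
        case False
        have "{y, z} \<noteq> {a, b}" using yz by auto
        then have "{y, z} \<in># E0" unfolding E0_def using yz False by (simp add: in_diff_single)
        then have "reach E0 y z" by (rule reach_edge)
        then have "z \<in> Ca" using yCa unfolding Ca_def by (metis mem_Collect_eq reach_trans)
        then show ?thesis by simp
      qed
    qed
  qed
  then show ?thesis using r Ca_no_c by blast
qed

lemma small_Ea:
  assumes "size Ea \<le> 1"
  shows "Ca = {a} \<and> Ea = {#{a, c}#}"
proof -
  obtain ec where ec: "ec \<in># Ea" "c \<in> ec" using Ea_c by blast
  have Ea1: "Ea = {#ec#}" using assms ec(1)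
    by (metis Suc_le_eq insert_DiffM le_zero_eq less_one nat_less_le size_add_mset size_empty size_eq_0_iff_empty le_SucE)
  have Ca1: "Ca = {a}"
  proof (rule ccontr)
    assume "Ca \<noteq> {a}"
    then obtain x where x: "x \<in> Ca" "x \<noteq> a" using aCa by blast
    then have "reach E0 a x" unfolding Ca_def by simp
    then obtain y where y: "{a, y} \<in># E0" "reach E0 y x" using reach_first x(2) by metis
    have "reach E0 a y" using y(1) by (rule reach_edge)
    then have "y \<in> Ca" unfolding Ca_def by simp
    then have "{a, y} \<in># Ea" unfolding Ea_def using y(1) E0_edge aCa by auto
    moreover have "c \<notin> {a, y}" using y(1) E0_edge by blast
    ultimately show False using Ea1 ec(2) by auto
  qed
  have "ec \<in># E" using ec(1) unfolding Ea_def by simp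
  then have "card ec = 2" using wfE by auto
  moreover have "ec \<subseteq> {a, c}" using ec(1) Ca1 unfolding Ea_def by auto
  moreover have "card {a, c} = 2" using cab by auto
  ultimately have "ec = {a, c}" by (metis card_subset_eq finite.emptyI finite_insert)
  then show ?thesis using Ea1 Ca1 by simp
qed

end




lemma is_ve_sep_sym: "is_ve_sep V E c u v \<Longrightarrow> is_ve_sep V E c v u"
proof -
  assume h: "is_ve_sep V E c u v"
  have eq: "{v, u} = {u, v}" by (rule insert_commute)
  show ?thesis using h unfolding is_ve_sep_def eq by blast
qed

lemma vesep_swap:
  assumes "vesep V E c a b"
  shows "vesep V E c b a" "vesep.E0 E c b a = vesep.E0 E c a b"
    "vesep.Ca E c b a = vesep.Cb E c a b" "vesep.Cb E c b a = vesep.Ca E c a b"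
    "vesep.Ea E c b a = vesep.Eb E c a b" "vesep.Eb E c b a = vesep.Ea E c a b"
proof -
  show "vesep V E c b a" using assms unfolding vesep_def by (auto intro: is_ve_sep_sym)
  show e0: "vesep.E0 E c b a = vesep.E0 E c a b"
    by (simp add: vesep.E0_def[OF assms] vesep.E0_def[OF \<open>vesep V E c b a\<close>] insert_commute)
  show "vesep.Ca E c b a = vesep.Cb E c a b" "vesep.Cb E c b a = vesep.Ca E c a b"
    by (simp_all add: vesep.Ca_def[OF assms] vesep.Ca_def[OF \<open>vesep V E c b a\<close>]
        vesep.Cb_def[OF assms] vesep.Cb_def[OF \<open>vesep V E c b a\<close>] e0)
  then show "vesep.Ea E c b a = vesep.Eb E c a b" "vesep.Eb E c b a = vesep.Ea E c a b"
    by (simp_all add: vesep.Ea_def[OF assms] vesep.Ea_def[OF \<open>vesep V E c b a\<close>]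
        vesep.Eb_def[OF assms] vesep.Eb_def[OF \<open>vesep V E c b a\<close>])
qed

lemma comb2:
  fixes V :: "'a set"
  assumes wf: "wf_graph V E" and AV: "A \<subseteq> V" and SV: "S \<subseteq> V" and AS: "A \<inter> S = {}"
    and cS: "card S \<le> 1"
    and edges: "\<forall>e\<in>#E. e \<subseteq> A \<union> S \<or> e \<inter> A = {}"
    and x: "x \<in> A" and y: "y \<in> V" "y \<notin> A" "y \<notin> S"
    and IH: "\<And>V' (E' :: 'a set multiset). card V' + size E' < card V + size E \<Longrightarrow> wf_graph V' E' \<Longrightarrow> hajos V' E'"
  shows "hajos V E"
proof (rule comb[OF wf AV SV AS cS edges])
  have finV: "finite V" using wf unfolding wf_graph_def by auto
  have wfE: "\<forall>e\<in>#E. e \<subseteq> V \<and> card e = 2" using wf unfolding wf_graph_def by auto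
  show "hajos (A \<union> S) (filter_mset (\<lambda>e. e \<inter> A \<noteq> {}) E)"
  proof (rule IH)
    have "A \<union> S \<subset> V" using AV SV y by auto
    then have "card (A \<union> S) < card V" using finV by (rule psubset_card_mono[rotated])
    moreover have "size (filter_mset (\<lambda>e. e \<inter> A \<noteq> {}) E) \<le> size E" by (rule size_filter_mset_lesseq)
    ultimately show "card (A \<union> S) + size (filter_mset (\<lambda>e. e \<inter> A \<noteq> {}) E) < card V + size E" by linarith
    show "wf_graph (A \<union> S) (filter_mset (\<lambda>e. e \<inter> A \<noteq> {}) E)"
      unfolding wf_graph_def using finV AV SV x wfE edges by (auto intro: finite_subset)
  qed
  show "hajos (V - A) (filter_mset (\<lambda>e. \<not> e \<inter> A \<noteq> {}) E)"
  proof (rule IH)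
    have "V - A \<subset> V" using x AV by auto
    then have "card (V - A) < card V" using finV by (rule psubset_card_mono[rotated])
    moreover have "size (filter_mset (\<lambda>e. \<not> e \<inter> A \<noteq> {}) E) \<le> size E" by (rule size_filter_mset_lesseq)
    ultimately show "card (V - A) + size (filter_mset (\<lambda>e. \<not> e \<inter> A \<noteq> {}) E) < card V + size E" by linarith
    show "wf_graph (V - A) (filter_mset (\<lambda>e. \<not> e \<inter> A \<noteq> {}) E)"
      unfolding wf_graph_def using finV y wfE by auto
  qed
qed

lemma vesep_measure:
  assumes vs: "vesep V E c a b" and big: "size (vesep.Ea E c a b) \<ge> 2"
  shows "card (vesep.Ca E c a b \<union> {c}) + size (add_mset {a, c} (vesep.Ea E c a b)) < card V + size E"
    "card (insert a (vesep.Cb E c a b \<union> {c})) + size (add_mset {b, a} (add_mset {a, c} (vesep.Eb E c a b)))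
       < card V + size E"
proof -
  interpret vesep V E c a b by (rule vs)
  have c1: "card (Ca \<union> {c}) = card Ca + 1" using finCa Ca_no_c by simp
  have "a \<notin> Cb \<union> {c}" using aCa disj cab by auto
  then have c2: "card (insert a (Cb \<union> {c})) = card Cb + 2" using finCb Cb_no_c by simp
  have "card Ca \<ge> 1" using aCa finCa by (metis One_nat_def Suc_leI card_gt_0_iff empty_iff)
  moreover have "card Cb \<ge> 1" using bCb finCb by (metis One_nat_def Suc_leI card_gt_0_iff empty_iff)
  ultimately show "card (Ca \<union> {c}) + size (add_mset {a, c} Ea) < card V + size E"
    "card (insert a (Cb \<union> {c})) + size (add_mset {b, a} (add_mset {a, c} Eb)) < card V + size E"
    using c1 c2 cardV size_E big by simp_all
qed

lemma all_hajos:
  fixes V :: "'a set"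
  assumes H: "\<forall>(V::'a set) E. wf_graph V E \<and> conn25 V E \<longrightarrow> hajos V E"
  shows "wf_graph V E \<Longrightarrow> hajos V E"
proof (induction "card V + size E" arbitrary: V E rule: less_induct)
  case less
  have IH: "\<And>V' (E' :: 'a set multiset). card V' + size E' < card V + size E \<Longrightarrow> wf_graph V' E' \<Longrightarrow> hajos V' E'"
    using less.hyps by blast
  note wf = less.prems
  have finV: "finite V" and Vne: "V \<noteq> {}" and wfE: "\<forall>e\<in>#E. e \<subseteq> V \<and> card e = 2"
    using wf unfolding wf_graph_def by auto
  have twoE: "\<exists>p q. e = {p, q} \<and> p \<in> V \<and> q \<in> V" if "e \<in># E" for e
    using wfE that by (metis card_2_iff insert_subset)
  show ?case
  proof (cases "biconnected V E")
    case False
    show ?thesis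
    proof (cases "connected_graph V E")
      case False
      then obtain x y where xy: "x \<in> V" "y \<in> V" "\<not> reach E x y"
        using Vne unfolding connected_graph_def by auto
      define A where "A = {z \<in> V. reach E x z}"
      show ?thesis
      proof (rule comb2[OF wf _ _ _ _ _ _ _ _ _ IH, of A "{}" x y])
        show "\<forall>e\<in>#E. e \<subseteq> A \<union> {} \<or> e \<inter> A = {}"
        proof
          fix e assume e: "e \<in># E"
          then obtain p q where pq: "e = {p, q}" "p \<in> V" "q \<in> V" using twoE by blast
          have "{p, q} \<in># E" using e pq by simp
          then have "reach E p q" "reach E q p" by (metis reach_edge reach_sym)+
          then have "p \<in> A \<longleftrightarrow> q \<in> A" unfolding A_def using pq by (metis (mono_tags, lifting) mem_Collect_eq reach_trans)
          then show "e \<subseteq> A \<union> {} \<or> e \<inter> A = {}" using pq by auto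
        qed
      qed (use xy A_def in auto)
    next
      case True
      then obtain u v w where uvw: "u \<in> V" "v \<in> V" "w \<in> V" "u \<noteq> v" "u \<noteq> w" "v \<noteq> w"
        "\<not> reach (filter_mset (\<lambda>e. w \<notin> e) E) u v"
        using False unfolding biconnected_def by blast
      define Ew where "Ew = filter_mset (\<lambda>e. w \<notin> e) E"
      define A where "A = {z \<in> V. z \<noteq> w \<and> reach Ew u z}"
      show ?thesis
      proof (rule comb2[OF wf _ _ _ _ _ _ _ _ _ IH, of A "{w}" u v])
        show "\<forall>e\<in>#E. e \<subseteq> A \<union> {w} \<or> e \<inter> A = {}"
        proof
          fix e assume e: "e \<in># E"
          then obtain p q where pq: "e = {p, q}" "p \<in> V" "q \<in> V" using twoE by blast
          show "e \<subseteq> A \<union> {w} \<or> e \<inter> A = {}"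
          proof (cases "w \<in> e")
            case True
            then show ?thesis using pq A_def by auto
          next
            case False
            then have "e \<in># Ew" unfolding Ew_def using e by simp
            then have "{p, q} \<in># Ew" using pq by simp
            then have "reach Ew p q" "reach Ew q p" by (metis reach_edge reach_sym)+
            then have "p \<in> A \<longleftrightarrow> q \<in> A" unfolding A_def using pq False
              by (metis (mono_tags, lifting) insertCI mem_Collect_eq reach_trans)
            then show ?thesis using pq by auto
          qed
        qed
      qed (use uvw A_def Ew_def in auto)
    qed
  next
    case bic: True
    show ?thesis
    proof (cases "conn25 V E")
      case True then show ?thesis using H wf by blast
    next
      case False
      then have nt: "\<not> triangle V E" and "\<exists>c u v. is_ve_sep V E c u v"
        using bic unfolding conn25_def by auto
      then obtain c u v where sep: "is_ve_sep V E c u v" by blast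
      have vs: "vesep V E c u v" unfolding vesep_def using wf bic sep by auto
      have vs': "vesep V E c v u" using vesep_swap(1)[OF vs] .
      have gen: "hajos V E" if vab: "vesep V E c a b" and big: "size (vesep.Ea E c a b) \<ge> 2" for a b
      proof (rule vesep.core[OF vab])
        show "hajos (vesep.Ca E c a b \<union> {c}) (add_mset {a, c} (vesep.Ea E c a b))"
          by (rule IH[OF vesep_measure(1)[OF vab big] vesep.wfG1[OF vab]])
        show "hajos (insert a (vesep.Cb E c a b \<union> {c})) (add_mset {b, a} (add_mset {a, c} (vesep.Eb E c a b)))"
          by (rule IH[OF vesep_measure(2)[OF vab big] vesep.wfG2[OF vab]])
      qed
      show ?thesis
      proof (cases "size (vesep.Ea E c u v) \<ge> 2")
        case True then show ?thesis using gen[OF vs] by blast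
      next
        case F1: False
        show ?thesis
        proof (cases "size (vesep.Eb E c u v) \<ge> 2")
          case True then show ?thesis using gen[OF vs'] vesep_swap(5)[OF vs] by simp
        next
          case F2: False
          have s1: "vesep.Ca E c u v = {u}" "vesep.Ea E c u v = {#{u, c}#}"
            using vesep.small_Ea[OF vs] F1 by auto
          have s2: "vesep.Ca E c v u = {v}" "vesep.Ea E c v u = {#{v, c}#}"
            using vesep.small_Ea[OF vs'] F2 vesep_swap(5)[OF vs] by auto
          have s2': "vesep.Cb E c u v = {v}" "vesep.Eb E c u v = {#{v, c}#}"
            using s2 vesep_swap(3,5)[OF vs] by auto
          have "V = {u, v, c}" using vesep.V_eq[OF vs] s1 s2' by auto
          moreover have "E = {#{u, v}, {v, c}, {u, c}#}"
          proof -
            obtain A B where AB: "A = vesep.Ea E c u v" "B = vesep.Eb E c u v"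
              and EAB: "E = add_mset {u, v} (A + B)" using vesep.E_split[OF vs] by blast
            show ?thesis using EAB AB s1 s2' by (simp add: add_mset_commute)
          qed
          moreover have "distinct [u, v, c]" using vesep.ab[OF vs] vesep.cab[OF vs] by auto
          ultimately have "triangle V E" unfolding triangle_def by blast
          then show ?thesis using nt by blast
        qed
      qed
    qed
  qed
qed

lemma cycle_graph_hajos: "is_cycle_graph V E \<Longrightarrow> hajos V E"
proof -
  assume "is_cycle_graph V E"
  then obtain vs where vs: "distinct vs" "length vs \<ge> 3" "V = set vs" "E = cycle_edges vs"
    unfolding is_cycle_graph_def by blast
  have "is_cycle E" unfolding is_cycle_def using vs by auto
  moreover have "card V = length vs" using vs by (simp add: distinct_card)
  ultimately have "(\<forall>C\<in>set [E]. is_cycle C) \<and> sum_list [E] = E \<and>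
     2 * int (length [E]) \<le> int (card V) + int (mult_excess E) - 1" using vs(2) by simp
  then show ?thesis unfolding hajos_def by blast
qed

abbreviation hp :: "'a piece \<Rightarrow> bool" where "hp P \<equiv> hajos (fst P) (image_mset fst (snd P))"
abbreviation wp :: "'a piece \<Rightarrow> bool" where "wp P \<equiv> wf_graph (fst P) (image_mset fst (snd P))"

lemma merge_back:
  "merge_step\<^sup>*\<^sup>* F1 F \<Longrightarrow> (\<forall>P\<in>#F. hp P) \<Longrightarrow> (\<forall>P\<in>#F1. hp P)"
proof (induction rule: converse_rtranclp_induct)
  case base then show ?case by simp
next
  case (step F1 F')
  have hF': "\<forall>P\<in>#F'. hp P" using step.IH step.prems by blast
  obtain V1 E1 V2 E2 rest e k where m: "F1 = add_mset (V1, E1) (add_mset (V2, E2) rest)"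
    "is_cycle_graph V1 (image_mset fst E1)" "is_cycle_graph V2 (image_mset fst E2)"
    "F' = add_mset (V1 \<union> V2, (E1 - {#(e, Some k)#}) + (E2 - {#(e, Some k)#})) rest"
    using step.hyps(1) unfolding merge_step_def by blast
  show ?case using m hF' cycle_graph_hajos by auto
qed

lemma split_one:
  assumes st: "split_step F F'" and wfF: "\<forall>P\<in>#F. wp P"
  shows "(\<forall>P\<in>#F'. wp P) \<and> ((\<forall>P\<in>#F'. hp P) \<longrightarrow> (\<forall>P\<in>#F. hp P))"
proof -
  obtain V E rest c u v l a b k where
    F: "F = add_mset (V, E) rest" and bic: "biconnected V (image_mset fst E)"
    and sep: "is_ve_sep V (image_mset fst E) c u v"
    and ab: "(a, b) = (u, v) \<or> (a, b) = (v, u)"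
    and L: "let E0 = filter_mset (\<lambda>e. c \<notin> e) (image_mset fst E - {#{u, v}#});
          Ca = {x. reach E0 a x};
          Cb = {x. reach E0 b x};
          Ea = filter_mset (\<lambda>e. fst e \<subseteq> Ca \<union> {c}) E;
          Eb = filter_mset (\<lambda>e. fst e \<subseteq> Cb \<union> {c}) E
      in size Ea \<ge> 2 \<and>
         (\<forall>P\<in>#F. \<forall>e\<in>#snd P. snd e \<noteq> Some k) \<and>
         F' = add_mset (Ca \<union> {c}, add_mset ({a, c}, Some k) Ea)
                (add_mset (insert a (Cb \<union> {c}),
                           add_mset ({b, a}, l) (add_mset ({a, c}, Some k) Eb)) rest)"
    using st unfolding split_step_def by blast
  define E0' where "E0' = filter_mset (\<lambda>e. c \<notin> e) (image_mset fst E - {#{u, v}#})"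
  define Ca' where "Ca' = {x. reach E0' a x}"
  define Cb' where "Cb' = {x. reach E0' b x}"
  have F': "F' = add_mset (Ca' \<union> {c}, add_mset ({a, c}, Some k) (filter_mset (\<lambda>e. fst e \<subseteq> Ca' \<union> {c}) E))
                (add_mset (insert a (Cb' \<union> {c}),
                           add_mset ({b, a}, l) (add_mset ({a, c}, Some k) (filter_mset (\<lambda>e. fst e \<subseteq> Cb' \<union> {c}) E))) rest)"
    using L unfolding Let_def Ca'_def Cb'_def E0'_def by blast
  define G where "G = image_mset fst E"
  have wfG: "wf_graph V G" using wfF F G_def by auto
  have uvab: "{u, v} = {a, b}" using ab by (auto simp: insert_commute)
  have sepab: "is_ve_sep V G c a b"
  proof (cases "(a, b) = (u, v)")
    case True then show ?thesis using sep unfolding G_def by simp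
  next
    case False
    then have "a = v" "b = u" using ab by auto
    then show ?thesis using is_ve_sep_sym[OF sep] \<open>a = v\<close> \<open>b = u\<close> unfolding G_def by simp
  qed
  have vs: "vesep V G c a b" unfolding vesep_def using wfG bic sepab G_def by auto
  have E0: "E0' = vesep.E0 G c a b"
    using vesep.E0_def[OF vs] uvab unfolding E0'_def G_def by simp
  have Ca: "Ca' = vesep.Ca G c a b"
    using vesep.Ca_def[OF vs] E0 unfolding Ca'_def by simp
  have Cb: "Cb' = vesep.Cb G c a b"
    using vesep.Cb_def[OF vs] E0 unfolding Cb'_def by simp
  have Ea: "image_mset fst (filter_mset (\<lambda>e. fst e \<subseteq> vesep.Ca G c a b \<union> {c}) E) = vesep.Ea G c a b"
  proof -
    have "vesep.Ea G c a b = filter_mset (\<lambda>e. e \<subseteq> vesep.Ca G c a b \<union> {c}) G" by (rule vesep.Ea_def[OF vs])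
    then show ?thesis unfolding G_def by (simp add: filter_mset_image_mset)
  qed
  have Eb: "image_mset fst (filter_mset (\<lambda>e. fst e \<subseteq> vesep.Cb G c a b \<union> {c}) E) = vesep.Eb G c a b"
  proof -
    have "vesep.Eb G c a b = filter_mset (\<lambda>e. e \<subseteq> vesep.Cb G c a b \<union> {c}) G" by (rule vesep.Eb_def[OF vs])
    then show ?thesis unfolding G_def by (simp add: filter_mset_image_mset)
  qed
  have F'': "F' = add_mset (vesep.Ca G c a b \<union> {c}, add_mset ({a, c}, Some k) (filter_mset (\<lambda>e. fst e \<subseteq> vesep.Ca G c a b \<union> {c}) E))
     (add_mset (insert a (vesep.Cb G c a b \<union> {c}), add_mset ({b, a}, l) (add_mset ({a, c}, Some k)
        (filter_mset (\<lambda>e. fst e \<subseteq> vesep.Cb G c a b \<union> {c}) E))) rest)"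
    using F' Ca Cb by simp
  have w1: "wp (vesep.Ca G c a b \<union> {c}, add_mset ({a, c}, Some k) (filter_mset (\<lambda>e. fst e \<subseteq> vesep.Ca G c a b \<union> {c}) E))"
    using vesep.wfG1[OF vs] Ea by simp
  have w2: "wp (insert a (vesep.Cb G c a b \<union> {c}), add_mset ({b, a}, l) (add_mset ({a, c}, Some k)
        (filter_mset (\<lambda>e. fst e \<subseteq> vesep.Cb G c a b \<union> {c}) E)))"
    using vesep.wfG2[OF vs] Eb by simp
  have "\<forall>P\<in>#F'. wp P" using F'' w1 w2 wfF F by auto
  moreover have "(\<forall>P\<in>#F'. hp P) \<longrightarrow> (\<forall>P\<in>#F. hp P)"
  proof
    assume h: "\<forall>P\<in>#F'. hp P"
    have "hajos V G"
    proof (rule vesep.core[OF vs])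
      show "hajos (vesep.Ca G c a b \<union> {c}) (add_mset {a, c} (vesep.Ea G c a b))"
        using h F'' Ea by auto
      show "hajos (insert a (vesep.Cb G c a b \<union> {c})) (add_mset {b, a} (add_mset {a, c} (vesep.Eb G c a b)))"
        using h F'' Eb by auto
    qed
    then show "\<forall>P\<in>#F. hp P" using h F F'' G_def by auto
  qed
  ultimately show ?thesis by blast
qed

lemma split_back:
  "split_step\<^sup>*\<^sup>* F F1 \<Longrightarrow> (\<forall>P\<in>#F. wp P) \<Longrightarrow> (\<forall>P\<in>#F1. hp P) \<Longrightarrow> (\<forall>P\<in>#F. hp P)"
proof (induction rule: converse_rtranclp_induct)
  case base then show ?case by simp
next
  case (step F F')
  show ?case using split_one[OF step.hyps(1) step.prems(1)] step.IH step.prems(2) by blast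
qed

lemma part1:
  assumes wf: "wf_graph V E" and d: "decomp25 V E F" and h: "\<forall>P\<in>#F. hp P"
  shows "hajos V E"
proof -
  obtain F1 where s: "split_step\<^sup>*\<^sup>* {#(V, image_mset (\<lambda>e. (e, None)) E)#} F1"
    and m: "merge_step\<^sup>*\<^sup>* F1 F" using d unfolding decomp25_def by blast
  have "\<forall>P\<in>#F1. hp P" using merge_back[OF m h] .
  moreover have "\<forall>P\<in>#{#(V, image_mset (\<lambda>e. (e, None :: nat option)) E)#}. wp P"
    using wf by (simp add: image_mset.compositionality comp_def)
  ultimately have "\<forall>P\<in>#{#(V, image_mset (\<lambda>e. (e, None :: nat option)) E)#}. hp P"
    using split_back[OF s] by blast
  then show ?thesis by (simp add: image_mset.compositionality comp_def)
qed

theorem theorem11: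
  shows "(\<forall>(V::'a set) E. wf_graph V E \<and> biconnected V E \<and>
            (\<exists>F. decomp25 V E F \<and> (\<forall>P\<in>#F. hajos (fst P) (image_mset fst (snd P))))
            \<longrightarrow> hajos V E) \<and>
         ((\<forall>(V::'a set) E. wf_graph V E \<longrightarrow> hajos V E) \<longleftrightarrow>
          (\<forall>(V::'a set) E. wf_graph V E \<and> conn25 V E \<longrightarrow> hajos V E))"
  using part1 all_hajos by blast


end
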